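(* Every positive stochastic choice function on a finite set $X$ is an unrestricted generalized nested logit.
   Context: $X$ is a finite set, $\mathscr{A}$ the nonempty subsets; a stochastic choice function is $p:X\times\mathscr{A}\to[0,1]$ with $\sum_{a\in A}p(a,A)=1$, $p(x,A)=0$ for $x\notin A$, and $p(a,A)>0$ for $a\in A$. $p$ is an unrestricted generalized nested logit if there exist subsets $X_1,\dots,X_K$ of $X$ (not necessarily disjoint), numbers $\alpha^k_x\ge 0$ with $\sum_{k=1}^K\alpha^k_x=1$ for each $x\in X$ and $\alpha^k_x=0$ iff $x\notin X_k$, $u:X\to\mathbb{R}_{++}$ and $\lambda_1,\dots,\lambda_K>0$ such that for every $A\in\mathscr{A}$ and $x\in A$, $p(x,A)=\sum_{k:\,x\in A\cap X_k}\frac{(\alpha^k_x u(x))^{1/\lambda_k}}{\sum_{y\in A\cap X_k}(\alpha^k_y u(y))^{1/\lambda_k}}\cdot\frac{\Big(\sum_{y\in A\cap X_k}(\alpha^k_y u(y))^{1/\lambda_k}\Big)^{\lambda_k}}{\sum_{l:\,A\cap X_l\ne\emptyset}\Big(\sum_{z\in A\cap X_l}(\alpha^l_z u(z))^{1/\lambda_l}\Big)^{\lambda_l}}$. *)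

theory Defs
  imports Complex_Main
begin

definition stochastic_choice :: "'a set \<Rightarrow> ('a \<Rightarrow> 'a set \<Rightarrow> real) \<Rightarrow> bool" where
  "stochastic_choice X p \<longleftrightarrow>
     (\<forall>A. A \<subseteq> X \<and> A \<noteq> {} \<longrightarrow>
        (\<forall>x\<in>X. 0 \<le> p x A \<and> p x A \<le> 1) \<and>
        (\<Sum>a\<in>A. p a A) = 1 \<and>
        (\<forall>x\<in>X. x \<notin> A \<longrightarrow> p x A = 0) \<and>
        (\<forall>a\<in>A. p a A > 0))"

definition nest_sum ::
  "('a set) \<Rightarrow> (nat \<Rightarrow> 'a \<Rightarrow> real) \<Rightarrow> ('a \<Rightarrow> real) \<Rightarrow> real \<Rightarrow> nat \<Rightarrow> 'a set \<Rightarrow> real" where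
  "nest_sum Xk \<alpha> u lam k A = (\<Sum>y\<in>A \<inter> Xk. (\<alpha> k y * u y) powr (1 / lam))"

text \<open>Generalized nested logit choice probability, nests indexed by k < K
  (k = 0..K-1 corresponds to 1..K in the paper).\<close>
definition gnl_prob ::
  "nat \<Rightarrow> (nat \<Rightarrow> 'a set) \<Rightarrow> (nat \<Rightarrow> 'a \<Rightarrow> real) \<Rightarrow> ('a \<Rightarrow> real) \<Rightarrow> (nat \<Rightarrow> real)
     \<Rightarrow> 'a \<Rightarrow> 'a set \<Rightarrow> real" where
  "gnl_prob K N \<alpha> u lam x A =
     (\<Sum>k\<in>{k. k < K \<and> x \<in> A \<inter> N k}.
        ((\<alpha> k x * u x) powr (1 / lam k) / nest_sum (N k) \<alpha> u (lam k) k A) *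
        (nest_sum (N k) \<alpha> u (lam k) k A powr lam k /
         (\<Sum>l\<in>{l. l < K \<and> A \<inter> N l \<noteq> {}}. nest_sum (N l) \<alpha> u (lam l) l A powr lam l)))"

definition unrestricted_gnl :: "'a set \<Rightarrow> ('a \<Rightarrow> 'a set \<Rightarrow> real) \<Rightarrow> bool" where
  "unrestricted_gnl X p \<longleftrightarrow>
     (\<exists>(K::nat) (N::nat \<Rightarrow> 'a set) (\<alpha>::nat \<Rightarrow> 'a \<Rightarrow> real) (u::'a \<Rightarrow> real) (lam::nat \<Rightarrow> real).
        1 \<le> K \<and>
        (\<forall>k<K. N k \<subseteq> X) \<and>
        (\<forall>k<K. \<forall>x\<in>X. \<alpha> k x \<ge> 0) \<and>
        (\<forall>x\<in>X. (\<Sum>k<K. \<alpha> k x) = 1) \<and>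
        (\<forall>k<K. \<forall>x\<in>X. \<alpha> k x = 0 \<longleftrightarrow> x \<notin> N k) \<and>
        (\<forall>x\<in>X. u x > 0) \<and>
        (\<forall>k<K. lam k > 0) \<and>
        (\<forall>A. A \<subseteq> X \<and> A \<noteq> {} \<longrightarrow> (\<forall>x\<in>A. p x A = gnl_prob K N \<alpha> u lam x A)))"

end

theory Submission
  imports Defs
begin



lemma pow_diff_bound:
  fixes a b c :: real
  assumes "0 \<le> a" "a \<le> c" "0 \<le> b" "b \<le> c"
  shows "\<bar>a ^ m - b ^ m\<bar> \<le> real m * c ^ (m - 1) * \<bar>a - b\<bar>"
proof (cases m)
  case 0 then show ?thesis by simp
next
  case (Suc n)
  have "a ^ m - b ^ m = (a - b) * (\<Sum>q<Suc n. a ^ q * b ^ (n - q))"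
    using Suc diff_power_eq_sum by blast
  hence e: "\<bar>a ^ m - b ^ m\<bar> = \<bar>a - b\<bar> * (\<Sum>q<Suc n. a ^ q * b ^ (n - q))"
    using assms by (simp add: abs_mult sum_nonneg)
  have "(\<Sum>q<Suc n. a ^ q * b ^ (n - q)) \<le> (\<Sum>q<Suc n. c ^ n)"
  proof (rule sum_mono)
    fix q assume "q \<in> {..<Suc n}"
    hence "q \<le> n" by simp
    have "a ^ q * b ^ (n - q) \<le> c ^ q * c ^ (n - q)"
      using assms by (intro mult_mono power_mono) auto
    also have "\<dots> = c ^ n" using \<open>q \<le> n\<close> by (simp add: power_add[symmetric])
    finally show "a ^ q * b ^ (n - q) \<le> c ^ n" .
  qed
  also have "(\<Sum>q<Suc n. c ^ n) = real m * c ^ (m - 1)" using Suc by simp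
  finally have "\<bar>a - b\<bar> * (\<Sum>q<Suc n. a ^ q * b ^ (n - q)) \<le> \<bar>a - b\<bar> * (real m * c ^ (m - 1))"
    by (simp add: mult_left_mono)
  thus ?thesis using e by (simp add: mult.commute mult.left_commute)
qed




definition sig :: "('a set \<Rightarrow> 'a \<Rightarrow> real) \<Rightarrow> 'a set \<Rightarrow> 'a set \<Rightarrow> real" where
  "sig \<pi> B T = (\<Sum>y\<in>T. \<pi> B y)"

locale gnlfp =
  fixes X :: "'a set" and p :: "'a \<Rightarrow> 'a set \<Rightarrow> real" and \<delta> M \<eta> :: real and L :: nat
  assumes finX: "finite X" and Xne: "X \<noteq> {}"
  and sc: "stochastic_choice X p"
  and dpos: "0 < \<delta>"
  and plb: "\<And>A x. A \<subseteq> X \<Longrightarrow> x \<in> A \<Longrightarrow> 2*\<delta> \<le> p x A"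
  and M1: "1 \<le> M" and Meta: "1/M \<le> \<eta>" and Mdel: "1/M \<le> \<delta>/(2 * real (card (Pow X)))"
  and L2: "2 \<le> L"
  and Leta: "M ^ card X * (3 * real L * (1-\<delta>)^(L-2)) \<le> \<eta>"
  and Ldel: "M ^ card X * (3 * real L * (1-\<delta>)^(L-2)) \<le> \<delta>/(2 * real (card (Pow X)))"
  and etapos: "0 < \<eta>"
  and etasum: "\<eta> * (\<Sum>A\<in>Pow X. real (card A)) \<le> 1/2"
begin

definition bt :: "'a set \<Rightarrow> real" where "bt B = M ^ card B"
definition SD :: "'a set \<Rightarrow> 'a set set" where "SD A = {B \<in> Pow X. B \<noteq> A \<and> A \<inter> B \<noteq> {}}"
definition Tm :: "('a set \<Rightarrow> 'a \<Rightarrow> real) \<Rightarrow> 'a set \<Rightarrow> 'a \<Rightarrow> 'a set \<Rightarrow> real" where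
  "Tm \<pi> A x B = bt B * (p x A * sig \<pi> B (A\<inter>B) ^ L
      - (if x \<in> B then sig \<pi> B (A\<inter>B) ^ (L-1) * \<pi> B x else 0))"
definition Fm :: "('a set \<Rightarrow> 'a \<Rightarrow> real) \<Rightarrow> 'a set \<Rightarrow> 'a \<Rightarrow> real" where
  "Fm \<pi> = (\<lambda>A x. (p x A * bt A + (\<Sum>B\<in>SD A. Tm \<pi> A x B)) / bt A)"
definition dm :: "('a set \<Rightarrow> 'a \<Rightarrow> real) \<Rightarrow> bool" where
  "dm \<pi> \<longleftrightarrow> (\<forall>A. A \<subseteq> X \<longrightarrow> A \<noteq> {} \<longrightarrow> (\<forall>x\<in>A. \<delta> \<le> \<pi> A x) \<and> sig \<pi> A A = 1)"
definition l1B :: "('a set \<Rightarrow> 'a \<Rightarrow> real) \<Rightarrow> ('a set \<Rightarrow> 'a \<Rightarrow> real) \<Rightarrow> 'a set \<Rightarrow> real" where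
  "l1B \<pi> \<pi>' B = (\<Sum>x\<in>B. \<bar>\<pi> B x - \<pi>' B x\<bar>)"
definition l1 :: "('a set \<Rightarrow> 'a \<Rightarrow> real) \<Rightarrow> ('a set \<Rightarrow> 'a \<Rightarrow> real) \<Rightarrow> real" where
  "l1 \<pi> \<pi>' = (\<Sum>B\<in>Pow X. l1B \<pi> \<pi>' B)"

lemma finSub: "B \<subseteq> X \<Longrightarrow> finite B" using finX finite_subset by blast

lemma p_props:
  assumes "A \<subseteq> X" "A \<noteq> {}"
  shows "(\<Sum>a\<in>A. p a A) = 1" "\<And>x. x \<in> A \<Longrightarrow> 0 \<le> p x A \<and> p x A \<le> 1"
  using sc assms unfolding stochastic_choice_def by blast+

lemma delta_le: "\<delta> * (2 * real (card X)) \<le> 1"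
proof -
  have "real (card X) * (2*\<delta>) \<le> (\<Sum>x\<in>X. p x X)"
    using sum_bounded_below[of X "2*\<delta>" "\<lambda>x. p x X"] plb by auto
  thus ?thesis using p_props(1)[of X] Xne by (simp add: algebra_simps)
qed

lemma card_X_pos: "1 \<le> card X" using finX Xne by (simp add: Suc_le_eq card_gt_0_iff)

lemma delta_half: "\<delta> \<le> 1/2"
proof -
  have "1 \<le> real (card X)" using card_X_pos by simp
  hence "\<delta> * 2 * 1 \<le> \<delta> * 2 * real (card X)" using dpos by (intro mult_left_mono) auto
  thus ?thesis using delta_le by simp
qed

lemma bt_pos: "0 < bt B" unfolding bt_def using M1 by simp
lemma bt_ge1: "1 \<le> bt B" unfolding bt_def using M1 by simp
lemma bt_le: "B \<subseteq> X \<Longrightarrow> bt B \<le> M ^ card X"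
  unfolding bt_def using M1 finX by (intro power_increasing card_mono) auto
lemma bt_sub: assumes "B \<subset> A" "A \<subseteq> X" shows "M * bt B \<le> bt A"
proof -
  have "card B < card A" using assms finSub psubset_card_mono by blast
  hence "M * M ^ card B \<le> M ^ card A"
    using M1 by (metis Suc_leI power_Suc power_increasing)
  thus ?thesis unfolding bt_def .
qed
lemma bt_sub2: assumes "B \<subset> A" "A \<subseteq> X" shows "bt B \<le> bt A * \<eta>"
proof -
  have "bt B = (M * bt B) / M" using M1 by simp
  also have "\<dots> \<le> bt A / M" using bt_sub[OF assms] M1 by (simp add: pos_le_divide_eq mult.commute)
  also have "\<dots> = bt A * (1/M)" by simp
  also have "\<dots> \<le> bt A * \<eta>" using Meta bt_pos by (intro mult_left_mono) (auto simp: less_imp_le)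
  finally show ?thesis .
qed

lemma dm_nonneg: "dm \<pi> \<Longrightarrow> B \<subseteq> X \<Longrightarrow> y \<in> B \<Longrightarrow> \<delta> \<le> \<pi> B y"
  unfolding dm_def by blast

lemma dm_le1: assumes "dm \<pi>" "B \<subseteq> X" "y \<in> B" shows "\<pi> B y \<le> 1"
proof -
  have "\<pi> B y \<le> sig \<pi> B B" unfolding sig_def
    using assms finSub dm_nonneg dpos
    by (intro member_le_sum) (auto intro: order_trans[OF less_imp_le[OF dpos]])
  thus ?thesis using assms unfolding dm_def by auto
qed

lemma sig_ge: assumes "dm \<pi>" "B \<subseteq> X" "T \<subseteq> B" "y \<in> T" shows "\<pi> B y \<le> sig \<pi> B T"
  unfolding sig_def
  using assms finSub[of T] dm_nonneg[OF assms(1) assms(2)] dpos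
  by (intro member_le_sum) (auto intro: order_trans[OF less_imp_le[OF dpos]])

lemma sig_sub: assumes "dm \<pi>" "A \<subseteq> X" "B \<in> SD A" "B \<subseteq> A" shows "sig \<pi> B (A\<inter>B) = 1"
proof -
  have "A \<inter> B = B" using assms by auto
  thus ?thesis using assms unfolding dm_def SD_def by auto
qed

lemma sig_nsub: assumes "dm \<pi>" "A \<subseteq> X" "B \<in> SD A" "\<not> B \<subseteq> A"
  shows "\<delta> \<le> sig \<pi> B (A\<inter>B)" "sig \<pi> B (A\<inter>B) \<le> 1 - \<delta>"
proof -
  have BX: "B \<subseteq> X" "B \<noteq> {}" using assms unfolding SD_def by auto
  obtain y where y: "y \<in> A \<inter> B" using assms unfolding SD_def by auto
  obtain z where z: "z \<in> B - A" using assms by auto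
  show "\<delta> \<le> sig \<pi> B (A\<inter>B)"
    using sig_ge[OF assms(1) BX(1), of "A\<inter>B" y] y dm_nonneg[OF assms(1) BX(1), of y] by auto
  have "\<delta> \<le> sig \<pi> B (B - A)"
    using sig_ge[OF assms(1) BX(1), of "B-A" z] z dm_nonneg[OF assms(1) BX(1), of z] by auto
  moreover have "sig \<pi> B B = sig \<pi> B (A\<inter>B) + sig \<pi> B (B - A)"
    unfolding sig_def using finSub[OF BX(1)]
    by (metis Diff_Int2 Int_commute inf.idem sum.Int_Diff)
  moreover have "sig \<pi> B B = 1" using assms BX unfolding dm_def by auto
  ultimately show "sig \<pi> B (A\<inter>B) \<le> 1 - \<delta>" by linarith
qed

lemma sig_diff: assumes "B \<subseteq> X" "T \<subseteq> B"
  shows "\<bar>sig \<pi> B T - sig \<pi>' B T\<bar> \<le> l1B \<pi> \<pi>' B"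
proof -
  have "\<bar>sig \<pi> B T - sig \<pi>' B T\<bar> = \<bar>\<Sum>y\<in>T. \<pi> B y - \<pi>' B y\<bar>"
    unfolding sig_def by (simp add: sum_subtractf)
  also have "\<dots> \<le> (\<Sum>y\<in>T. \<bar>\<pi> B y - \<pi>' B y\<bar>)" by (rule sum_abs)
  also have "\<dots> \<le> l1B \<pi> \<pi>' B" unfolding l1B_def
    using assms finSub by (intro sum_mono2) auto
  finally show ?thesis .
qed

lemma coord_le_l1B: assumes "B \<subseteq> X" "x \<in> B" shows "\<bar>\<pi> B x - \<pi>' B x\<bar> \<le> l1B \<pi> \<pi>' B"
  unfolding l1B_def using assms finSub by (intro member_le_sum) auto

end


context gnlfp begin

lemma r_props: "0 \<le> 1 - \<delta>" "1 - \<delta> \<le> 1" using delta_half dpos by auto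

lemma rpow_mono: "(1-\<delta>) ^ (L-1) \<le> (1-\<delta>)^(L-2)"
  using r_props L2 by (intro power_decreasing) auto

lemma Tdiff:
  assumes d: "dm \<pi>" "dm \<pi>'" and A: "A \<subseteq> X" "x \<in> A" and B: "B \<in> SD A"
  shows "\<bar>Tm \<pi> A x B - Tm \<pi>' A x B\<bar> \<le> bt A * \<eta> * l1B \<pi> \<pi>' B"
proof -
  have BX: "B \<subseteq> X" "B \<noteq> {}" "B \<noteq> A" using B unfolding SD_def by auto
  have l1nn: "0 \<le> l1B \<pi> \<pi>' B" unfolding l1B_def by (simp add: sum_nonneg)
  show ?thesis
  proof (cases "B \<subseteq> A")
    case True
    have s1: "sig \<pi> B (A\<inter>B) = 1" "sig \<pi>' B (A\<inter>B) = 1"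
      using sig_sub[OF _ A(1) B True] d by auto
    have "\<bar>Tm \<pi> A x B - Tm \<pi>' A x B\<bar> = bt B * (if x \<in> B then \<bar>\<pi> B x - \<pi>' B x\<bar> else 0)"
      unfolding Tm_def s1 using bt_pos[of B]
      by (auto simp: abs_mult right_diff_distrib[symmetric] abs_minus_commute)
    also have "\<dots> \<le> bt B * l1B \<pi> \<pi>' B"
      using coord_le_l1B[OF BX(1)] l1nn bt_pos[of B] by (intro mult_left_mono) auto
    also have "\<dots> \<le> bt A * \<eta> * l1B \<pi> \<pi>' B"
      using bt_sub2[of B A] True BX A l1nn by (intro mult_right_mono) auto
    finally show ?thesis .
  next
    case False
    define s where "s = sig \<pi> B (A\<inter>B)"
    define s' where "s' = sig \<pi>' B (A\<inter>B)"
    define r where "r = 1 - \<delta>"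
    define l where "l = l1B \<pi> \<pi>' B"
    have sb: "\<delta> \<le> s" "s \<le> r" "\<delta> \<le> s'" "s' \<le> r"
      using sig_nsub[OF _ A(1) B False] d unfolding s_def s'_def r_def by auto
    have sd: "\<bar>s - s'\<bar> \<le> l" unfolding s_def s'_def l_def using sig_diff BX by auto
    have r0: "0 \<le> r" "r \<le> 1" using r_props r_def by auto
    have rp: "r^(L-1) \<le> r^(L-2)" using rpow_mono r_def by simp
    have p01: "0 \<le> p x A" "p x A \<le> 1" using p_props(2)[OF A(1) _ A(2)] A by auto
    have e1: "\<bar>s^L - s'^L\<bar> \<le> real L * r^(L-2) * l"
    proof -
      have "\<bar>s^L - s'^L\<bar> \<le> real L * r^(L-1) * \<bar>s - s'\<bar>"
        using pow_diff_bound[of s r s' L] sb dpos by auto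
      also have "\<dots> \<le> real L * r^(L-2) * l"
        using rp sd r0 by (intro mult_mono) (auto simp: zero_le_power)
      finally show ?thesis .
    qed
    have e2: "\<bar>s^(L-1) * \<pi> B x - s'^(L-1) * \<pi>' B x\<bar> \<le> real L * r^(L-2) * l" if xB: "x \<in> B"
    proof -
      have px: "0 \<le> \<pi>' B x" "\<pi>' B x \<le> 1"
        using dm_nonneg[OF d(2) BX(1) xB] dpos dm_le1[OF d(2) BX(1) xB] by auto
      have "s^(L-1) * \<pi> B x - s'^(L-1) * \<pi>' B x
          = s^(L-1) * (\<pi> B x - \<pi>' B x) + \<pi>' B x * (s^(L-1) - s'^(L-1))"
        by (simp add: algebra_simps)
      hence "\<bar>s^(L-1) * \<pi> B x - s'^(L-1) * \<pi>' B x\<bar>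
          \<le> \<bar>s^(L-1) * (\<pi> B x - \<pi>' B x)\<bar> + \<bar>\<pi>' B x * (s^(L-1) - s'^(L-1))\<bar>"
        by (simp only: abs_triangle_ineq)
      also have "\<dots> = s^(L-1) * \<bar>\<pi> B x - \<pi>' B x\<bar> + \<pi>' B x * \<bar>s^(L-1) - s'^(L-1)\<bar>"
        using sb dpos px by (simp add: abs_mult)
      also have "\<dots> \<le> r^(L-2) * l + 1 * (real (L-1) * r^(L-1-1) * l)"
      proof (rule add_mono)
        have "s^(L-1) \<le> r^(L-1)" using sb dpos by (intro power_mono) auto
        hence "s^(L-1) \<le> r^(L-2)" using rp by linarith
        thus "s^(L-1) * \<bar>\<pi> B x - \<pi>' B x\<bar> \<le> r^(L-2) * l"
          using coord_le_l1B[OF BX(1) xB] l_def r0 by (intro mult_mono) auto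
        have "\<bar>s^(L-1) - s'^(L-1)\<bar> \<le> real (L-1) * r^(L-1-1) * \<bar>s - s'\<bar>"
          using pow_diff_bound[of s r s' "L-1"] sb dpos by auto
        also have "\<dots> \<le> real (L-1) * r^(L-1-1) * l"
          using sd r0 by (intro mult_left_mono) (auto simp: zero_le_power)
        finally show "\<pi>' B x * \<bar>s^(L-1) - s'^(L-1)\<bar> \<le> 1 * (real (L-1) * r^(L-1-1) * l)"
          using px by (intro mult_mono) auto
      qed
      also have "\<dots> = (1 + real (L-1)) * r^(L-2) * l"
        by (simp add: algebra_simps numeral_2_eq_2)
      also have "\<dots> = real L * r^(L-2) * l" using L2 by (simp add: of_nat_diff)
      finally show ?thesis .
    qed
    have "Tm \<pi> A x B - Tm \<pi>' A x B = bt B * (p x A * (s^L - s'^L)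
       - (if x \<in> B then s^(L-1) * \<pi> B x - s'^(L-1) * \<pi>' B x else 0))"
      unfolding Tm_def s_def s'_def by (simp add: algebra_simps)
    hence eqT: "\<bar>Tm \<pi> A x B - Tm \<pi>' A x B\<bar> = bt B * \<bar>p x A * (s^L - s'^L)
       - (if x \<in> B then s^(L-1) * \<pi> B x - s'^(L-1) * \<pi>' B x else 0)\<bar>"
      using bt_pos[of B] by (simp add: abs_mult)
    have "\<bar>Tm \<pi> A x B - Tm \<pi>' A x B\<bar> \<le> bt B * (p x A * \<bar>s^L - s'^L\<bar>
       + (if x \<in> B then \<bar>s^(L-1) * \<pi> B x - s'^(L-1) * \<pi>' B x\<bar> else 0))"
    proof -
      have "\<bar>p x A * (s^L - s'^L) - (if x \<in> B then s^(L-1) * \<pi> B x - s'^(L-1) * \<pi>' B x else 0)\<bar>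
         \<le> \<bar>p x A * (s^L - s'^L)\<bar> + \<bar>if x \<in> B then s^(L-1) * \<pi> B x - s'^(L-1) * \<pi>' B x else 0\<bar>"
        by (rule abs_triangle_ineq4)
      also have "\<dots> = p x A * \<bar>s^L - s'^L\<bar>
       + (if x \<in> B then \<bar>s^(L-1) * \<pi> B x - s'^(L-1) * \<pi>' B x\<bar> else 0)"
        using p01 by (simp add: abs_mult)
      finally show ?thesis unfolding eqT using bt_pos[of B]
        by (simp add: mult_left_mono)
    qed
    also have "\<dots> \<le> bt B * (1 * (real L * r^(L-2) * l) + real L * r^(L-2) * l)"
      using bt_pos[of B] p01 e1 e2 l1nn r0 l_def
      by (intro mult_left_mono add_mono mult_mono) (auto simp: zero_le_power)
    also have "\<dots> \<le> M ^ card X * (3 * real L * r^(L-2)) * l"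
    proof -
      have "bt B * (1 * (real L * r^(L-2) * l) + real L * r^(L-2) * l) = bt B * (2 * real L * r^(L-2) * l)"
        by (simp add: algebra_simps)
      also have "\<dots> \<le> M ^ card X * (3 * real L * r^(L-2) * l)"
        using bt_le[OF BX(1)] l1nn l_def r0 M1 by (intro mult_mono) (auto simp: zero_le_power)
      finally show ?thesis by (simp add: algebra_simps)
    qed
    also have "\<dots> \<le> \<eta> * l" using Leta r_def l1nn l_def by (intro mult_right_mono) auto
    also have "\<dots> \<le> bt A * \<eta> * l"
    proof -
      have "1 * (\<eta> * l) \<le> bt A * (\<eta> * l)" using bt_ge1[of A] etapos l1nn l_def
        by (intro mult_right_mono) auto
      thus ?thesis by (simp add: mult.assoc)
    qed
    finally show ?thesis unfolding l_def .
  qed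
qed

end


context gnlfp begin

lemma SD_fin: "finite (SD A)" unfolding SD_def using finX by auto
lemma SD_sub: "SD A \<subseteq> Pow X" unfolding SD_def by auto

lemma l1B_nn: "0 \<le> l1B \<pi> \<pi>' B" unfolding l1B_def by (simp add: sum_nonneg)

lemma Fcontr:
  assumes d: "dm \<pi>" "dm \<pi>'" and A: "A \<subseteq> X" "x \<in> A"
  shows "\<bar>Fm \<pi> A x - Fm \<pi>' A x\<bar> \<le> \<eta> * l1 \<pi> \<pi>'"
proof -
  have "Fm \<pi> A x - Fm \<pi>' A x = (\<Sum>B\<in>SD A. Tm \<pi> A x B - Tm \<pi>' A x B) / bt A"
    unfolding Fm_def sum_subtractf using bt_pos[of A] by (simp add: field_simps)
  hence "\<bar>Fm \<pi> A x - Fm \<pi>' A x\<bar> = \<bar>\<Sum>B\<in>SD A. Tm \<pi> A x B - Tm \<pi>' A x B\<bar> / bt A"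
    using bt_pos[of A] by simp
  also have "\<dots> \<le> (\<Sum>B\<in>SD A. bt A * \<eta> * l1B \<pi> \<pi>' B) / bt A"
    using bt_pos[of A]
    by (intro divide_right_mono order_trans[OF sum_abs] sum_mono Tdiff[OF d A]) auto
  also have "\<dots> = \<eta> * (\<Sum>B\<in>SD A. l1B \<pi> \<pi>' B)"
    using bt_pos[of A] by (simp add: sum_distrib_left[symmetric] mult.assoc)
  also have "\<dots> \<le> \<eta> * l1 \<pi> \<pi>'" unfolding l1_def
    using etapos SD_sub finX l1B_nn by (intro mult_left_mono sum_mono2) auto
  finally show ?thesis .
qed

lemma l1contr:
  assumes d: "dm \<pi>" "dm \<pi>'"
  shows "l1 (Fm \<pi>) (Fm \<pi>') \<le> l1 \<pi> \<pi>' / 2"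
proof -
  have "l1 (Fm \<pi>) (Fm \<pi>') \<le> (\<Sum>A\<in>Pow X. \<Sum>x\<in>A. \<eta> * l1 \<pi> \<pi>')"
    unfolding l1_def[of "Fm \<pi>"] l1B_def using Fcontr[OF d] by (intro sum_mono) auto
  also have "\<dots> = (\<eta> * (\<Sum>A\<in>Pow X. real (card A))) * l1 \<pi> \<pi>'"
    by (simp add: sum_distrib_left sum_distrib_right mult.commute mult.left_commute)
  also have "\<dots> \<le> (1/2) * l1 \<pi> \<pi>'"
    using etasum by (intro mult_right_mono) (auto simp: l1_def l1B_nn sum_nonneg)
  finally show ?thesis by simp
qed

lemma bt_sub3: assumes "B \<subset> A" "A \<subseteq> X" shows "bt B \<le> bt A * (\<delta>/(2 * real (card (Pow X))))"
proof -
  have "bt B = (M * bt B) / M" using M1 by simp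
  also have "\<dots> \<le> bt A / M" using bt_sub[OF assms] M1 by (simp add: pos_le_divide_eq mult.commute)
  also have "\<dots> = bt A * (1/M)" by simp
  also have "\<dots> \<le> bt A * (\<delta>/(2 * real (card (Pow X))))" using Mdel bt_pos by (intro mult_left_mono) (auto simp: less_imp_le)
  finally show ?thesis .
qed

lemma Tm_lb:
  assumes d: "dm \<pi>" and A: "A \<subseteq> X" "x \<in> A" and B: "B \<in> SD A"
  shows "- (bt A * (\<delta>/(2 * real (card (Pow X))))) \<le> Tm \<pi> A x B"
proof -
  have BX: "B \<subseteq> X" "B \<noteq> {}" "B \<noteq> A" using B unfolding SD_def by auto
  have p01: "0 \<le> p x A" "p x A \<le> 1" using p_props(2)[OF A(1) _ A(2)] A by auto
  have Pp: "0 < real (card (Pow X))" using finX by (simp add: card_gt_0_iff Pow_not_empty)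
  have q0: "0 \<le> \<delta>/(2 * real (card (Pow X)))" using dpos Pp by simp
  show ?thesis
  proof (cases "B \<subseteq> A")
    case True
    have s1: "sig \<pi> B (A\<inter>B) = 1" using sig_sub[OF d A(1) B True] by auto
    have pi1: "x \<in> B \<Longrightarrow> \<pi> B x \<le> 1" using dm_le1[OF d BX(1)] by auto
    have "bt B * (0 - 1) \<le> Tm \<pi> A x B" unfolding Tm_def s1 using bt_pos[of B] p01 pi1
      by (intro mult_left_mono) auto
    moreover have "bt B \<le> bt A * (\<delta>/(2 * real (card (Pow X))))"
      using bt_sub3[of B A] True BX A by auto
    ultimately show ?thesis by (simp only: diff_0 mult_minus_right mult_1_right)
  next
    case False
    define s where "s = sig \<pi> B (A\<inter>B)"
    have sb: "\<delta> \<le> s" "s \<le> 1 - \<delta>" using sig_nsub[OF d A(1) B False] unfolding s_def by auto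
    have r0: "0 \<le> 1 - \<delta>" using r_props by auto
    have sp: "s^(L-1) \<le> (1-\<delta>)^(L-2)" using sb dpos rpow_mono
      by (meson less_imp_le order_trans power_mono)
    have pi1: "x \<in> B \<Longrightarrow> 0 \<le> \<pi> B x \<and> \<pi> B x \<le> 1"
      using dm_le1[OF d BX(1)] dm_nonneg[OF d BX(1)] dpos by (meson less_imp_le order_trans)
    have "0 \<le> p x A * s ^ L" using p01 sb dpos by simp
    moreover have "(if x \<in> B then s ^ (L-1) * \<pi> B x else 0) \<le> (1-\<delta>)^(L-2)"
      using pi1 sp sb dpos r0 mult_mono[of "s^(L-1)" "(1-\<delta>)^(L-2)" "\<pi> B x" 1]
      by (auto simp: zero_le_power)
    ultimately have "bt B * (0 - (1-\<delta>)^(L-2)) \<le> Tm \<pi> A x B"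
      unfolding Tm_def s_def[symmetric] using bt_pos[of B] by (intro mult_left_mono) auto
    moreover have "bt B * (1-\<delta>)^(L-2) \<le> M ^ card X * (3 * real L * (1-\<delta>)^(L-2))"
    proof -
      have "bt B * (1-\<delta>)^(L-2) \<le> M ^ card X * (1 * (1-\<delta>)^(L-2))"
        using bt_le[OF BX(1)] r0 by (auto intro: mult_right_mono simp: zero_le_power)
      also have "\<dots> \<le> M ^ card X * (3 * real L * (1-\<delta>)^(L-2))"
        using L2 r0 M1 by (intro mult_left_mono mult_right_mono) (auto simp: zero_le_power)
      finally show ?thesis .
    qed
    moreover have "\<delta>/(2 * real (card (Pow X))) \<le> bt A * (\<delta>/(2 * real (card (Pow X))))"
    proof -
      have "1 * (\<delta>/(2 * real (card (Pow X)))) \<le> bt A * (\<delta>/(2 * real (card (Pow X))))"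
        using bt_ge1[of A] q0 by (rule mult_right_mono)
      thus ?thesis by simp
    qed
    ultimately show ?thesis using Ldel by (simp add: algebra_simps)
  qed
qed

lemma dm_F: assumes d: "dm \<pi>" shows "dm (Fm \<pi>)"
  unfolding dm_def
proof (intro allI impI conjI ballI)
  fix A assume A: "A \<subseteq> X" "A \<noteq> {}"
  have Pp: "0 < real (card (Pow X))" using finX by (simp add: card_gt_0_iff Pow_not_empty)
  {
    fix x assume x: "x \<in> A"
    have "real (card (SD A)) * (- (bt A * (\<delta>/(2 * real (card (Pow X)))))) \<le> (\<Sum>B\<in>SD A. Tm \<pi> A x B)"
      by (rule sum_bounded_below) (rule Tm_lb[OF d A(1) x])
    moreover have "real (card (SD A)) \<le> real (card (Pow X))"
      using card_mono[OF _ SD_sub] finX by auto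
    moreover have "0 \<le> bt A * (\<delta>/(2 * real (card (Pow X))))" using bt_pos[of A] dpos Pp by simp
    ultimately have "- (real (card (Pow X)) * (bt A * (\<delta>/(2 * real (card (Pow X)))))) \<le> (\<Sum>B\<in>SD A. Tm \<pi> A x B)"
    proof -
      fix a b c d :: real assume "a * - c \<le> d" "a \<le> b" "0 \<le> c"
      hence "b * c \<ge> a * c" by (intro mult_right_mono)
      thus "- (b * c) \<le> d" using \<open>a * - c \<le> d\<close> by simp
    qed
    hence lb: "- (bt A * \<delta> / 2) \<le> (\<Sum>B\<in>SD A. Tm \<pi> A x B)" using Pp by simp
    have "2 * \<delta> * bt A \<le> p x A * bt A" using plb[OF A(1) x] bt_pos[of A] by (intro mult_right_mono) auto
    moreover have "- (\<delta> * bt A / 2) \<le> (\<Sum>B\<in>SD A. Tm \<pi> A x B)" using lb by (simp add: mult.commute)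
    moreover have "0 < \<delta> * bt A" using dpos bt_pos[of A] by simp
    ultimately have "\<delta> * bt A \<le> p x A * bt A + (\<Sum>B\<in>SD A. Tm \<pi> A x B)" by linarith
    thus "\<delta> \<le> Fm \<pi> A x" unfolding Fm_def using bt_pos[of A] by (simp add: pos_le_divide_eq)
  }
  have finA: "finite A" using A finSub by auto
  have z: "(\<Sum>x\<in>A. Tm \<pi> A x B) = 0" if B: "B \<in> SD A" for B
  proof -
    define s where "s = sig \<pi> B (A\<inter>B)"
    have "(\<Sum>x\<in>A. (if x \<in> B then s ^ (L-1) * \<pi> B x else 0)) = (\<Sum>x\<in>A\<inter>B. s ^ (L-1) * \<pi> B x)"
      using sum.inter_restrict[OF finA] by metis
    also have "\<dots> = s ^ (L-1) * s" unfolding s_def sig_def by (simp add: sum_distrib_left)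
    also have "\<dots> = s ^ L" using L2 by (metis Suc_diff_1 dual_order.strict_trans1 pos2 power_Suc2)
    finally have e: "(\<Sum>x\<in>A. (if x \<in> B then s ^ (L-1) * \<pi> B x else 0)) = s ^ L" .
    have "(\<Sum>x\<in>A. Tm \<pi> A x B) = bt B * (s ^ L * (\<Sum>x\<in>A. p x A) - (\<Sum>x\<in>A. (if x \<in> B then s ^ (L-1) * \<pi> B x else 0)))"
      unfolding Tm_def s_def[symmetric]
      by (simp add: sum_distrib_left sum_distrib_right sum_subtractf algebra_simps)
    thus ?thesis using e p_props(1)[OF A] by simp
  qed
  have "sig (Fm \<pi>) A A = ((\<Sum>x\<in>A. p x A) * bt A + (\<Sum>x\<in>A. \<Sum>B\<in>SD A. Tm \<pi> A x B)) / bt A"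
    unfolding sig_def Fm_def by (simp add: sum_divide_distrib[symmetric] sum.distrib sum_distrib_right)
  also have "(\<Sum>x\<in>A. \<Sum>B\<in>SD A. Tm \<pi> A x B) = 0"
    by (subst sum.swap) (simp add: z)
  finally show "sig (Fm \<pi>) A A = 1" using p_props(1)[OF A] bt_pos[of A] by simp
qed

end


context gnlfp begin

definition pi0 :: "'a set \<Rightarrow> 'a \<Rightarrow> real" where "pi0 = (\<lambda>B y. 1 / real (card B))"

lemma dm_pi0: "dm pi0"
  unfolding dm_def
proof (intro allI impI conjI ballI)
  fix A assume A: "A \<subseteq> X" "A \<noteq> {}"
  have cA: "1 \<le> card A" "card A \<le> card X" using A finSub finX
    by (auto simp: Suc_le_eq card_gt_0_iff card_mono)
  show "sig pi0 A A = 1" unfolding sig_def pi0_def using cA by simp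
  fix x assume "x \<in> A"
  have "\<delta> * real (card A) \<le> \<delta> * (2 * real (card X))" using cA dpos by (intro mult_left_mono) auto
  hence "\<delta> * real (card A) \<le> 1" using delta_le by linarith
  thus "\<delta> \<le> pi0 A x" unfolding pi0_def using cA by (simp add: pos_le_divide_eq)
qed

definition q :: "nat \<Rightarrow> 'a set \<Rightarrow> 'a \<Rightarrow> real" where "q k = (Fm ^^ k) pi0"

lemma q_Suc: "q (Suc k) = Fm (q k)" unfolding q_def by simp

lemma dm_q: "dm (q k)"
  by (induction k) (auto simp: q_def dm_pi0 dm_F)

lemma l1_nn: "0 \<le> l1 \<pi> \<pi>'" unfolding l1_def by (simp add: sum_nonneg l1B_nn)

lemma q_geo: "l1 (q (Suc k)) (q k) \<le> (1/2)^k * l1 (q 1) (q 0)"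
proof (induction k)
  case 0 then show ?case by simp
next
  case (Suc k)
  have "l1 (q (Suc (Suc k))) (q (Suc k)) \<le> l1 (q (Suc k)) (q k) / 2"
    using l1contr[OF dm_q[of "Suc k"] dm_q[of k]] by (simp only: q_Suc)
  also have "\<dots> \<le> (1/2)^k * l1 (q 1) (q 0) / 2" using Suc by simp
  finally show ?case by simp
qed

lemma coord_le_l1: assumes "A \<subseteq> X" "x \<in> A" shows "\<bar>\<pi> A x - \<pi>' A x\<bar> \<le> l1 \<pi> \<pi>'"
proof -
  have "\<bar>\<pi> A x - \<pi>' A x\<bar> \<le> l1B \<pi> \<pi>' A" using coord_le_l1B assms by auto
  also have "\<dots> \<le> l1 \<pi> \<pi>'" unfolding l1_def using assms finX l1B_nn
    by (intro member_le_sum) auto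
  finally show ?thesis .
qed

lemma q_conv: assumes "A \<subseteq> X" "x \<in> A" shows "convergent (\<lambda>k. q k A x)"
proof -
  define C where "C = l1 (q 1) (q 0)"
  have sg: "summable (\<lambda>k. C * (1/2)^k)" by (intro summable_mult summable_geometric) simp
  have "summable (\<lambda>k. q (Suc k) A x - q k A x)"
  proof (rule summable_comparison_test[OF _ sg])
    show "\<exists>N. \<forall>n\<ge>N. norm (q (Suc n) A x - q n A x) \<le> C * (1/2)^n"
      using coord_le_l1[OF assms] q_geo unfolding C_def
      by (metis (no_types, lifting) mult.commute order_trans real_norm_def)
  qed
  hence "(\<lambda>n. \<Sum>i<n. q (Suc i) A x - q i A x) \<longlonglongrightarrow> suminf (\<lambda>k. q (Suc k) A x - q k A x)"
    by (rule summable_LIMSEQ)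
  hence "(\<lambda>n. q n A x - q 0 A x) \<longlonglongrightarrow> suminf (\<lambda>k. q (Suc k) A x - q k A x)"
    by (simp add: sum_lessThan_telescope[of "\<lambda>i. q i A x"])
  hence "(\<lambda>n. (q n A x - q 0 A x) + q 0 A x) \<longlonglongrightarrow> suminf (\<lambda>k. q (Suc k) A x - q k A x) + q 0 A x"
    by (intro tendsto_add tendsto_const)
  thus ?thesis unfolding convergent_def by auto
qed

definition pis :: "'a set \<Rightarrow> 'a \<Rightarrow> real" where "pis A x = lim (\<lambda>k. q k A x)"

lemma q_lim: assumes "A \<subseteq> X" "x \<in> A" shows "(\<lambda>k. q k A x) \<longlonglongrightarrow> pis A x"
  unfolding pis_def using q_conv[OF assms] convergent_LIMSEQ_iff by blast

lemma dm_pis: "dm pis"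
  unfolding dm_def
proof (intro allI impI conjI ballI)
  fix A assume A: "A \<subseteq> X" "A \<noteq> {}"
  {
    fix x assume x: "x \<in> A"
    show "\<delta> \<le> pis A x"
      using LIMSEQ_le_const[OF q_lim[OF A(1) x], of \<delta>] dm_q A x unfolding dm_def by blast
  }
  have "(\<lambda>k. sig (q k) A A) \<longlonglongrightarrow> sig pis A A"
    unfolding sig_def using q_lim A by (intro tendsto_sum) auto
  moreover have "(\<lambda>k. sig (q k) A A) = (\<lambda>k. 1)" using dm_q A unfolding dm_def by auto
  ultimately show "sig pis A A = 1" using LIMSEQ_unique tendsto_const by metis
qed

lemma l1_pis_q: "(\<lambda>k. l1 pis (q k)) \<longlonglongrightarrow> 0"
proof -
  have "(\<lambda>k. l1 pis (q k)) \<longlonglongrightarrow> (\<Sum>B\<in>Pow X. \<Sum>x\<in>B. \<bar>pis B x - pis B x\<bar>)"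
    unfolding l1_def l1B_def
    by (intro tendsto_sum tendsto_rabs tendsto_diff tendsto_const q_lim) auto
  thus ?thesis by simp
qed

lemma fixpoint: "dm pis \<and> (\<forall>A. A \<subseteq> X \<longrightarrow> (\<forall>x\<in>A. Fm pis A x = pis A x))"
proof (intro conjI allI impI ballI dm_pis)
  fix A x assume A: "A \<subseteq> X" and x: "x \<in> A"
  have b: "\<bar>Fm pis A x - pis A x\<bar> \<le> \<eta> * l1 pis (q k) + \<bar>q (Suc k) A x - pis A x\<bar>" for k
  proof -
    have "\<bar>Fm pis A x - pis A x\<bar> \<le> \<bar>Fm pis A x - Fm (q k) A x\<bar> + \<bar>q (Suc k) A x - pis A x\<bar>"
      unfolding q_Suc by linarith
    thus ?thesis using Fcontr[OF dm_pis dm_q A x, of k] by linarith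
  qed
  have "(\<lambda>k. \<eta> * l1 pis (q k) + \<bar>q (Suc k) A x - pis A x\<bar>) \<longlonglongrightarrow> \<eta> * 0 + \<bar>pis A x - pis A x\<bar>"
    by (intro tendsto_add tendsto_mult tendsto_const l1_pis_q tendsto_rabs tendsto_diff
        LIMSEQ_Suc[OF q_lim[OF A x]])
  hence "\<bar>Fm pis A x - pis A x\<bar> \<le> 0"
    using LIMSEQ_le_const[of _ 0 "\<bar>Fm pis A x - pis A x\<bar>"] b by auto
  thus "Fm pis A x = pis A x" by simp
qed

end


context gnlfp begin

lemma fp_eq:
  assumes A: "A \<subseteq> X" "x \<in> A"
  shows "p x A * (bt A + (\<Sum>B\<in>SD A. bt B * sig pis B (A\<inter>B) ^ L))
    = bt A * pis A x + (\<Sum>B\<in>SD A. if x \<in> B then bt B * sig pis B (A\<inter>B) ^ (L-1) * pis B x else 0)"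
proof -
  have "Fm pis A x = pis A x" using fixpoint A by blast
  hence "p x A * bt A + (\<Sum>B\<in>SD A. Tm pis A x B) = pis A x * bt A"
    unfolding Fm_def using bt_pos[of A] by (simp add: divide_eq_eq)
  moreover have "(\<Sum>B\<in>SD A. Tm pis A x B) = p x A * (\<Sum>B\<in>SD A. bt B * sig pis B (A\<inter>B) ^ L)
     - (\<Sum>B\<in>SD A. if x \<in> B then bt B * sig pis B (A\<inter>B) ^ (L-1) * pis B x else 0)"
    unfolding Tm_def sum_distrib_left sum_subtractf[symmetric]
    by (intro sum.cong) (auto simp: algebra_simps)
  ultimately show ?thesis by (simp add: algebra_simps)
qed

lemma reidx:
  fixes K :: nat and e :: "nat \<Rightarrow> 'a set"
  assumes e: "bij_betw e {0..<K} (Pow X)"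
  shows "(\<Sum>k\<in>{k. k < K \<and> P (e k)}. g (e k)) = (\<Sum>B\<in>{B\<in>Pow X. P B}. (g B :: real))"
proof -
  have "(\<Sum>k\<in>{k. k < K \<and> P (e k)}. g (e k)) = (\<Sum>k\<in>{k\<in>{0..<K}. P (e k)}. g (e k))"
    by (rule sum.cong) auto
  also have "\<dots> = (\<Sum>k\<in>{0..<K}. if P (e k) then g (e k) else 0)" by (rule sum.inter_filter) simp
  also have "\<dots> = (\<Sum>B\<in>Pow X. if P B then g B else 0)"
    by (rule sum.reindex_bij_betw[OF e])
  also have "\<dots> = (\<Sum>B\<in>{B\<in>Pow X. P B}. g B)" using finX by (intro sum.inter_filter[symmetric]) auto
  finally show ?thesis .
qed

lemma pis_pos: "B \<subseteq> X \<Longrightarrow> y \<in> B \<Longrightarrow> 0 < pis B y"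
  using dm_nonneg[OF dm_pis] dpos by (meson less_le_trans)

end


context gnlfp begin
theorem gnl: "unrestricted_gnl X p"
proof -
  define K where "K = card (Pow X)"
  have fP: "finite (Pow X)" using finX by simp
  obtain e where e: "bij_betw e {0..<K} (Pow X)"
    using ex_bij_betw_nat_finite[OF fP] unfolding K_def by (elim exE)
  have eX: "k < K \<Longrightarrow> e k \<subseteq> X" for k using bij_betw_apply[OF e] by auto
  define u where "u y = (\<Sum>B\<in>Pow X. if y \<in> B then bt B * pis B y ^ L else 0)" for y
  define \<alpha>B where "\<alpha>B B y = (if y \<in> B then bt B * pis B y ^ L / u y else 0)" for B y
  define \<alpha> where "\<alpha> k y = \<alpha>B (e k) y" for k y
  define lam :: "nat \<Rightarrow> real" where "lam k = real L" for k
  have Lpos: "0 < real L" using L2 by simp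
  have upos: "0 < u y" if y: "y \<in> X" for y
  proof -
    have nn: "0 \<le> (if y \<in> B then bt B * pis B y ^ L else 0)" if "B \<in> Pow X - {{y}}" for B
    proof (cases "y \<in> B")
      case True
      then show ?thesis using that pis_pos[of B y] bt_pos[of B] by simp
    qed simp
    have "(if y \<in> {y} then bt {y} * pis {y} y ^ L else 0) \<le> u y" unfolding u_def
      using y finX by (intro member_le_sum nn) auto
    hence "bt {y} * pis {y} y ^ L \<le> u y" by simp
    moreover have "0 < bt {y} * pis {y} y ^ L" using bt_pos pis_pos[of "{y}" y] y by simp
    ultimately show ?thesis by linarith
  qed
  have au: "\<alpha>B B y * u y = bt B * pis B y ^ L" if "B \<subseteq> X" "y \<in> B" for B y
    using that upos[of y] unfolding \<alpha>B_def by auto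
  have au2: "(\<alpha>B B y * u y) powr (1 / real L) = bt B powr (1 / real L) * pis B y" if "B \<subseteq> X" "y \<in> B" for B y
  proof -
    have "(pis B y ^ L) powr (1 / real L) = pis B y"
      using pis_pos[OF that] Lpos by (simp add: powr_realpow[symmetric] powr_powr)
    thus ?thesis using au[OF that] by (simp add: powr_mult)
  qed
  define s where "s B = bt B powr (1 / real L)" for B
  have sL: "s B powr real L = bt B" for B
    unfolding s_def using bt_pos[of B] Lpos by (simp add: powr_powr)
  have spos: "0 < s B" for B unfolding s_def using bt_pos[of B] by simp
  have ns: "nest_sum B \<alpha>' u (real L) k A = s B * sig pis B (A \<inter> B)"
    if "B \<subseteq> X" "\<And>y. \<alpha>' k y = \<alpha>B B y" for B A \<alpha>' k
    unfolding nest_sum_def sig_def s_def sum_distrib_left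
    using that au2 by (intro sum.cong) auto
  have sigpos: "0 < sig pis B (A \<inter> B)" if AB: "B \<subseteq> X" "A \<inter> B \<noteq> {}" for A B
  proof -
    obtain y where "y \<in> A \<inter> B" using AB by auto
    thus ?thesis using sig_ge[OF dm_pis AB(1), of "A\<inter>B" y] pis_pos[OF AB(1), of y] by auto
  qed
  have nsL: "(s B * sig pis B (A \<inter> B)) powr real L = bt B * sig pis B (A \<inter> B) ^ L"
    if "B \<subseteq> X" "A \<inter> B \<noteq> {}" for A B
    using sL sigpos[OF that] by (simp add: powr_mult powr_realpow)
  show ?thesis unfolding unrestricted_gnl_def
  proof (intro exI conjI allI impI ballI)
    show "1 \<le> K" unfolding K_def using finX by (simp add: Suc_le_eq card_gt_0_iff Pow_not_empty)
    show "\<And>k. k < K \<Longrightarrow> e k \<subseteq> X" by (rule eX)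
    have apos: "0 < \<alpha> k y" if ky: "k < K" "y \<in> X" "y \<in> e k" for k y
    proof -
      have "0 < bt (e k) * pis (e k) y ^ L / u y"
        using bt_pos[of "e k"] pis_pos[OF eX[OF ky(1)] ky(3)] upos[OF ky(2)]
        by (intro divide_pos_pos mult_pos_pos zero_less_power)
      thus ?thesis unfolding \<alpha>_def \<alpha>B_def using ky(3) by simp
    qed
    have azero: "\<alpha> k y = 0" if "y \<notin> e k" for k y
      unfolding \<alpha>_def \<alpha>B_def using that by simp
    show "\<And>k x. k < K \<Longrightarrow> x \<in> X \<Longrightarrow> 0 \<le> \<alpha> k x"
      using apos azero by (metis less_imp_le order_refl)
    show "\<And>x. x \<in> X \<Longrightarrow> (\<Sum>k<K. \<alpha> k x) = 1"
    proof -
      fix x assume x: "x \<in> X"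
      have "(\<Sum>k<K. \<alpha> k x) = (\<Sum>k\<in>{0..<K}. \<alpha>B (e k) x)" unfolding \<alpha>_def by (simp add: atLeast0LessThan)
      also have "\<dots> = (\<Sum>B\<in>Pow X. \<alpha>B B x)" by (rule sum.reindex_bij_betw[OF e])
      also have "\<dots> = u x / u x" unfolding \<alpha>B_def u_def sum_divide_distrib
        by (intro sum.cong) auto
      finally show "(\<Sum>k<K. \<alpha> k x) = 1" using upos[OF x] by simp
    qed
    show "\<And>k x. k < K \<Longrightarrow> x \<in> X \<Longrightarrow> (\<alpha> k x = 0) = (x \<notin> e k)"
      using apos azero by (metis less_irrefl)
    show "\<And>x. x \<in> X \<Longrightarrow> 0 < u x" by (rule upos)
    show "\<And>k. k < K \<Longrightarrow> 0 < lam k" unfolding lam_def using Lpos by simp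
    fix A x assume Ax: "A \<subseteq> X \<and> A \<noteq> {}" and x: "x \<in> A"
    have A: "A \<subseteq> X" "A \<noteq> {}" using Ax by auto
    define \<sigma> where "\<sigma> B = sig pis B (A \<inter> B)" for B
    define Den where "Den = bt A + (\<Sum>B\<in>SD A. bt B * \<sigma> B ^ L)"
    have "0 \<le> bt B * \<sigma> B ^ L" if "B \<in> SD A" for B
    proof -
      have "B \<subseteq> X" "A \<inter> B \<noteq> {}" using that unfolding SD_def by auto
      thus ?thesis unfolding \<sigma>_def using sigpos bt_pos[of B] by (simp add: less_imp_le)
    qed
    hence Denpos: "0 < Den" unfolding Den_def using bt_pos[of A]
      by (intro add_pos_nonneg sum_nonneg) auto
    have sA: "\<sigma> A = 1" unfolding \<sigma>_def using dm_pis A unfolding dm_def by auto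
    have setD: "{B \<in> Pow X. A \<inter> B \<noteq> {}} = insert A (SD A)" unfolding SD_def using A by auto
    have setN: "{B \<in> Pow X. x \<in> A \<inter> B} = insert A {B \<in> SD A. x \<in> B}" unfolding SD_def using A x by auto
    have AnSD: "A \<notin> SD A" "finite (SD A)" unfolding SD_def using finX by auto
    have den: "(\<Sum>l\<in>{l. l < K \<and> A \<inter> e l \<noteq> {}}. nest_sum (e l) \<alpha> u (lam l) l A powr lam l) = Den"
    proof -
      have "(\<Sum>l\<in>{l. l < K \<and> A \<inter> e l \<noteq> {}}. nest_sum (e l) \<alpha> u (lam l) l A powr lam l)
          = (\<Sum>l\<in>{l. l < K \<and> A \<inter> e l \<noteq> {}}. bt (e l) * \<sigma> (e l) ^ L)"
        unfolding lam_def \<sigma>_def using ns[OF eX] nsL[OF eX] \<alpha>_def by (intro sum.cong) auto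
      also have "\<dots> = (\<Sum>B\<in>{B \<in> Pow X. A \<inter> B \<noteq> {}}. bt B * \<sigma> B ^ L)"
        by (rule reidx[OF e, where P="\<lambda>B. A \<inter> B \<noteq> {}" and g="\<lambda>B. bt B * \<sigma> B ^ L"])
      also have "\<dots> = Den" unfolding setD Den_def using AnSD sA by simp
      finally show ?thesis .
    qed
    have "gnl_prob K e \<alpha> u lam x A
        = (\<Sum>k\<in>{k. k < K \<and> x \<in> A \<inter> e k}. bt (e k) * \<sigma> (e k) ^ (L-1) * pis (e k) x / Den)"
      unfolding gnl_prob_def den
    proof (intro sum.cong refl)
      fix k assume k: "k \<in> {k. k < K \<and> x \<in> A \<inter> e k}"
      have kX: "e k \<subseteq> X" "x \<in> e k" "A \<inter> e k \<noteq> {}" using k eX by auto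
      have n1: "nest_sum (e k) \<alpha> u (lam k) k A = s (e k) * \<sigma> (e k)"
        unfolding lam_def \<sigma>_def using ns[OF kX(1)] \<alpha>_def by auto
      have a1: "(\<alpha> k x * u x) powr (1 / lam k) = s (e k) * pis (e k) x"
        unfolding lam_def \<alpha>_def s_def using au2[OF kX(1,2)] by simp
      have p1: "(s (e k) * \<sigma> (e k)) powr lam k = bt (e k) * \<sigma> (e k) ^ L"
        unfolding lam_def \<sigma>_def using nsL[OF kX(1,3)] by simp
      have sp: "0 < \<sigma> (e k)" unfolding \<sigma>_def using sigpos[OF kX(1,3)] .
      have "\<sigma> (e k) ^ L = \<sigma> (e k) ^ (L-1) * \<sigma> (e k)" using L2
        by (metis Suc_diff_1 dual_order.strict_trans1 pos2 power_Suc2)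
      thus "(\<alpha> k x * u x) powr (1 / lam k) / nest_sum (e k) \<alpha> u (lam k) k A *
          (nest_sum (e k) \<alpha> u (lam k) k A powr lam k / Den) =
          bt (e k) * \<sigma> (e k) ^ (L - 1) * pis (e k) x / Den"
        unfolding n1 a1 p1 using spos[of "e k"] sp by (simp add: field_simps)
    qed
    also have "\<dots> = (\<Sum>B\<in>{B\<in>Pow X. x \<in> A \<inter> B}. bt B * \<sigma> B ^ (L-1) * pis B x / Den)"
      by (rule reidx[OF e, where P="\<lambda>B. x \<in> A \<inter> B" and g="\<lambda>B. bt B * \<sigma> B ^ (L-1) * pis B x / Den"])
    also have "\<dots> = (bt A * pis A x + (\<Sum>B\<in>SD A. if x \<in> B then bt B * \<sigma> B ^ (L-1) * pis B x else 0)) / Den"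
    proof -
      have "(\<Sum>B\<in>{B\<in>Pow X. x \<in> A \<inter> B}. bt B * \<sigma> B ^ (L-1) * pis B x / Den)
          = bt A * pis A x / Den + (\<Sum>B\<in>{B \<in> SD A. x \<in> B}. bt B * \<sigma> B ^ (L-1) * pis B x / Den)"
        unfolding setN using AnSD sA by simp
      also have "(\<Sum>B\<in>{B \<in> SD A. x \<in> B}. bt B * \<sigma> B ^ (L-1) * pis B x / Den)
          = (\<Sum>B\<in>SD A. if x \<in> B then bt B * \<sigma> B ^ (L-1) * pis B x / Den else 0)"
        using AnSD by (intro sum.inter_filter)
      also have "\<dots> = (\<Sum>B\<in>SD A. (if x \<in> B then bt B * \<sigma> B ^ (L-1) * pis B x else 0) / Den)"
        by (intro sum.cong) auto
      also have "\<dots> = (\<Sum>B\<in>SD A. (if x \<in> B then bt B * \<sigma> B ^ (L-1) * pis B x else 0)) / Den"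
        by (rule sum_divide_distrib[symmetric])
      finally show ?thesis by (simp only: add_divide_distrib)
    qed
    also have "\<dots> = p x A * Den / Den" unfolding Den_def \<sigma>_def using fp_eq[OF A(1) x] by simp
    also have "\<dots> = p x A" using Denpos by simp
    finally show "p x A = gnl_prob K e \<alpha> u lam x A" by simp
  qed
qed

end



lemma exists_L:
  fixes r \<epsilon> :: real
  assumes "0 \<le> r" "r < 1" "0 < \<epsilon>"
  shows "\<exists>L::nat. 2 \<le> L \<and> 3 * real L * r ^ (L - 2) \<le> \<epsilon>"
proof -
  have "(\<lambda>j. 3 * (of_nat j * r ^ j) + 6 * r ^ j) \<longlonglongrightarrow> 3 * 0 + 6 * 0"
    using assms
    by (intro tendsto_add tendsto_mult tendsto_const powser_times_n_limit_0 LIMSEQ_realpow_zero) auto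
  hence "(\<lambda>j. 3 * (of_nat j * r ^ j) + 6 * r ^ j) \<longlonglongrightarrow> 0" by simp
  then obtain N where N: "\<forall>n\<ge>N. norm ((3 * (of_nat n * r ^ n) + 6 * r ^ n) - 0) < \<epsilon>"
    using assms(3) unfolding LIMSEQ_iff by blast
  hence "\<bar>3 * (real N * r ^ N) + 6 * r ^ N\<bar> < \<epsilon>" by auto
  hence "3 * real (N+2) * r ^ (N + 2 - 2) \<le> \<epsilon>" by (simp add: algebra_simps)
  thus ?thesis by (intro exI[of _ "N+2"]) auto
qed

theorem corollary1:
  fixes X :: "'a set" and p :: "'a \<Rightarrow> 'a set \<Rightarrow> real"
  assumes "finite X"
    and "stochastic_choice X p"
  shows "unrestricted_gnl X p"
proof (cases "X = {}")
  case True
  show ?thesis unfolding unrestricted_gnl_def True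
    by (rule exI[of _ 1], rule exI[of _ "\<lambda>_. {}"], rule exI[of _ "\<lambda>_ _. 0"],
        rule exI[of _ "\<lambda>_. 1"], rule exI[of _ "\<lambda>_. 1"]) auto
next
  case False
  note finX = assms(1) and sc = assms(2)
  define I where "I = {(A, x). A \<in> Pow X \<and> x \<in> A}"
  have finI: "finite I" unfolding I_def
    by (rule finite_subset[of _ "Pow X \<times> X"]) (auto simp: finX)
  have Ine: "I \<noteq> {}" using False unfolding I_def by auto
  define pmin where "pmin = Min ((\<lambda>(A, x). p x A) ` I)"
  have ppos: "0 < p x A" and ple1: "p x A \<le> 1" if "A \<subseteq> X" "x \<in> A" for A x
  proof -
    have "A \<noteq> {}" "x \<in> X" using that by auto
    thus "0 < p x A" "p x A \<le> 1" using sc that unfolding stochastic_choice_def by blast+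
  qed
  have pmin_le: "pmin \<le> p x A" if "A \<subseteq> X" "x \<in> A" for A x
    unfolding pmin_def using finI that by (intro Min_le) (auto simp: I_def)
  have pmin_pos: "0 < pmin"
  proof -
    have "pmin \<in> (\<lambda>(A, x). p x A) ` I" unfolding pmin_def using finI Ine by (intro Min_in) auto
    thus ?thesis using ppos unfolding I_def by auto
  qed
  obtain x0 where x0: "x0 \<in> X" using False by auto
  have pmin_le1: "pmin \<le> 1" using pmin_le[of X x0] ple1[of X x0] x0 by auto
  define \<delta> where "\<delta> = pmin / 2"
  have dpos: "0 < \<delta>" and dle: "\<delta> \<le> 1/2" unfolding \<delta>_def using pmin_pos pmin_le1 by auto
  define P where "P = real (card (Pow X))"
  have Ppos: "0 < P" unfolding P_def using finX by (simp add: card_gt_0_iff Pow_not_empty)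
  define S where "S = (\<Sum>A\<in>Pow X. real (card A))"
  have Snn: "0 \<le> S" unfolding S_def by (simp add: sum_nonneg)
  define \<eta> where "\<eta> = 1 / (2 * (S + 1))"
  have etapos: "0 < \<eta>" unfolding \<eta>_def using Snn by simp
  have etasum: "\<eta> * S \<le> 1/2" unfolding \<eta>_def using Snn by (simp add: field_simps)
  define M where "M = max 1 (max (1/\<eta>) (2 * P / \<delta>))"
  have M1: "1 \<le> M" unfolding M_def by simp
  have Meta: "1/M \<le> \<eta>"
  proof -
    have "1/\<eta> \<le> M" unfolding M_def by simp
    thus ?thesis using etapos M1 by (simp add: divide_le_eq mult.commute)
  qed
  have Mdel: "1/M \<le> \<delta>/(2*P)"
  proof -
    have "2*P/\<delta> \<le> M" unfolding M_def by simp
    hence "2*P \<le> M * \<delta>" using dpos by (simp add: divide_le_eq)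
    thus ?thesis using dpos Ppos M1 by (simp add: divide_le_eq field_simps)
  qed
  define \<epsilon> where "\<epsilon> = min \<eta> (\<delta>/(2*P)) / M ^ card X"
  have epos: "0 < \<epsilon>" unfolding \<epsilon>_def using etapos dpos Ppos M1 by simp
  obtain L :: nat where L: "2 \<le> L" "3 * real L * (1-\<delta>) ^ (L - 2) \<le> \<epsilon>"
    using exists_L[of "1-\<delta>" \<epsilon>] dpos dle epos by auto
  have LL: "M ^ card X * (3 * real L * (1-\<delta>)^(L-2)) \<le> min \<eta> (\<delta>/(2*P))"
  proof -
    have "0 < M ^ card X" using M1 by simp
    hence "M ^ card X * (3 * real L * (1-\<delta>)^(L-2)) \<le> M ^ card X * \<epsilon>"
      using L(2) by (intro mult_left_mono) auto
    also have "\<dots> = min \<eta> (\<delta>/(2*P))" unfolding \<epsilon>_def using M1 by simp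
    finally show ?thesis .
  qed
  interpret gnlfp X p \<delta> M \<eta> L
  proof
    show "finite X" "X \<noteq> {}" "stochastic_choice X p" "0 < \<delta>" "1 \<le> M" "1/M \<le> \<eta>" "2 \<le> L" "0 < \<eta>"
      using finX False sc dpos M1 Meta L etapos by auto
    show "\<And>A x. A \<subseteq> X \<Longrightarrow> x \<in> A \<Longrightarrow> 2 * \<delta> \<le> p x A" unfolding \<delta>_def using pmin_le by auto
    show "1/M \<le> \<delta>/(2 * real (card (Pow X)))" using Mdel unfolding P_def .
    show "M ^ card X * (3 * real L * (1-\<delta>)^(L-2)) \<le> \<eta>" using LL by simp
    show "M ^ card X * (3 * real L * (1-\<delta>)^(L-2)) \<le> \<delta>/(2 * real (card (Pow X)))" using LL unfolding P_def by simp
    show "\<eta> * (\<Sum>A\<in>Pow X. real (card A)) \<le> 1/2" using etasum unfolding S_def .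
  qed
  show ?thesis by (rule gnl)
qed



end
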